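(* Let $k\ge1$ and let $\mu_k$ be an LTI probability measure on $X_k=\{0,1\}^{\{0,\ldots,k\}}$. Suppose there is a bijection $\phi:X_k\to X_k$ with $\mu_k(\phi(\eta))=\mu_k(\eta)$ for all $\eta$ and $\phi(\{0\xi,1\xi\})=\{\xi0,\xi1\}$ for every binary string $\xi$ of length $k$. Then $\mu_k$ has a translation invariant extension $\mu$ to $\{0,1\}^{\mathbb{Z}}$ with total entropy $S(\mu)=S(\mu_k)$; consequently $\mu$ has minimal total entropy among all translation invariant extensions of $\mu_k$. Explicitly, if $P_1,\ldots,P_n$ are the orbits of $\phi$, each viewed as a closed path in the de Bruijn graph $G_k$ with edges $\eta,\phi(\eta),\phi^2(\eta),\ldots$, and $w_i$ is the common value of $\mu_k$ on the edges of $P_i$, then $\mu=\sum_{i=1}^n w_i|P_i|\,\nu_{P_i}$.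
   Context: Total entropy $S(\mu)=\lim_{j\to\infty}S(\pi_j\mu)$, with $\pi_j\mu$ the marginal on coordinates $0,\ldots,j$ and $S$ the Gibbs–Shannon entropy. De Bruijn graph $G_k$: vertices binary strings of length $k$, edges binary strings of length $k+1$, edge $a\theta b$ from $a\theta$ to $\theta b$. For a closed path $P$ with edges $\eta^{(1)},\ldots,\eta^{(p)}$ that is not a repetition of a shorter closed path, $\nu_P$ gives mass $1/p$ to each of the $p$ translates of the periodic configuration obtained by traversing $P$ repeatedly and recording the first symbol of each edge. LTI: for $A,A'\subset\{0,\ldots,k\}$ with $A'$ a translate of $A$, the marginals on $A'$ and $A$ agree up to translation. *)

theory Defs
  imports "HOL-Probability.Probability"
begin

text \<open>Configurations on the integers: \<open>int \<Rightarrow> bool\<close> (False = 0, True = 1),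
  with the product sigma-algebra.\<close>
definition Mz :: "(int \<Rightarrow> bool) measure" where
  "Mz = (\<Pi>\<^sub>M i\<in>(UNIV::int set). count_space (UNIV::bool set))"

text \<open>Binary strings of length n (vertices / edges of de Bruijn graphs, elements of X_k).\<close>
definition bin_strings :: "nat \<Rightarrow> bool list set" where
  "bin_strings n = {xs. length xs = n}"

definition gs_entropy :: "('a \<Rightarrow> real) \<Rightarrow> 'a set \<Rightarrow> real" where
  "gs_entropy p A = - (\<Sum>a\<in>A. p a * ln (p a))"

definition marginal_prob :: "(int \<Rightarrow> bool) measure \<Rightarrow> nat \<Rightarrow> bool list \<Rightarrow> real" where
  "marginal_prob \<mu> j xs = measure \<mu> {x \<in> space \<mu>. map x [0..int j] = xs}"

definition total_entropy :: "(int \<Rightarrow> bool) measure \<Rightarrow> ereal" where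
  "total_entropy \<mu> = lim (\<lambda>j. ereal (gs_entropy (marginal_prob \<mu> j) (bin_strings (Suc j))))"

definition ti_measure :: "(int \<Rightarrow> bool) measure \<Rightarrow> bool" where
  "ti_measure \<mu> \<longleftrightarrow> prob_space \<mu> \<and> sets \<mu> = sets Mz \<and>
     distr \<mu> Mz (\<lambda>x i. x (i + 1)) = \<mu>"

definition extends :: "(int \<Rightarrow> bool) measure \<Rightarrow> nat \<Rightarrow> bool list pmf \<Rightarrow> bool" where
  "extends \<mu> k \<mu>k \<longleftrightarrow> (\<forall>xs\<in>bin_strings (Suc k). marginal_prob \<mu> k xs = pmf \<mu>k xs)"

definition LTI :: "nat \<Rightarrow> bool list pmf \<Rightarrow> bool" where
  "LTI k \<mu>k \<longleftrightarrow> (\<forall>A t. A \<subseteq> {0..k} \<and> (\<lambda>i. i + t) ` A \<subseteq> {0..k} \<longrightarrow>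
      map_pmf (\<lambda>\<eta>. restrict (\<lambda>i. \<eta> ! (i + t)) A) \<mu>k =
      map_pmf (\<lambda>\<eta>. restrict (\<lambda>i. \<eta> ! i) A) \<mu>k)"

text \<open>Periodic configuration of a closed path P (list of edges): traverse P repeatedly,
  recording the first symbol of each edge.\<close>
definition cyc_config :: "bool list list \<Rightarrow> int \<Rightarrow> bool" where
  "cyc_config P i = hd (P ! nat (i mod int (length P)))"

definition nu_path :: "bool list list \<Rightarrow> (int \<Rightarrow> bool) pmf" where
  "nu_path P = map_pmf (\<lambda>s i. cyc_config P (i + int s)) (pmf_of_set {..<length P})"

definition orbit_of :: "('a \<Rightarrow> 'a) \<Rightarrow> 'a \<Rightarrow> 'a set" where
  "orbit_of \<phi> \<eta> = {(\<phi> ^^ n) \<eta> | n. True}"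

definition orbit_path :: "('a \<Rightarrow> 'a) \<Rightarrow> 'a \<Rightarrow> 'a list" where
  "orbit_path \<phi> \<eta> = map (\<lambda>n. (\<phi> ^^ n) \<eta>) [0..<card (orbit_of \<phi> \<eta>)]"

end

theory Submission
  imports Defs
begin


lemma space_Mz[simp]: "space Mz = UNIV"
  by (simp add: Mz_def space_PiM)

lemma upto_int_eq: "[0..int j] = map int [0..<Suc j]"
proof (induction j)
  case 0 then show ?case by simp
next
  case (Suc j)
  have "[0..int (Suc j)] = [0..int (Suc j) - 1] @ [int (Suc j)]"
    by (rule upto_rec2) simp
  also have "int (Suc j) - 1 = int j" by simp
  finally show ?case using Suc by simp
qed

lemma coord_sets: "{x \<in> space Mz. x a = y} \<in> sets Mz"
proof -
  have "(\<lambda>x. x a) \<in> measurable Mz (count_space UNIV)"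
    unfolding Mz_def by (rule measurable_component_singleton) simp
  then have "(\<lambda>x. x a) -` {y} \<inter> space Mz \<in> sets Mz"
    by (rule measurable_sets) simp
  moreover have "(\<lambda>x. x a) -` {y} \<inter> space Mz = {x \<in> space Mz. x a = y}" by auto
  ultimately show ?thesis by simp
qed

lemma cyl_sets: "{x \<in> space Mz. map x L = xs} \<in> sets Mz"
proof (induction L arbitrary: xs)
  case Nil
  show ?case using sets.top[of Mz] by (cases xs) auto
next
  case (Cons a L)
  show ?case
  proof (cases xs)
    case Nil then show ?thesis by simp
  next
    case (Cons y ys)
    have "{x \<in> space Mz. map x (a # L) = xs} = {x \<in> space Mz. x a = y} \<inter> {x \<in> space Mz. map x L = ys}"
      using Cons by auto
    then show ?thesis using coord_sets Cons.IH by auto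
  qed
qed

lemma shift_meas: "(\<lambda>x i. x (i + 1)) \<in> measurable Mz Mz"
  unfolding Mz_def
  by (rule measurable_PiM_single') (auto intro: measurable_component_singleton)




lemma xlnx_le: fixes a c :: real assumes "0 \<le> a" "0 \<le> c"
  shows "a * ln a \<le> a * ln (a + c)"
proof (cases "a = 0")
  case False
  then have "a > 0" using assms by simp
  then have "ln a \<le> ln (a + c)" using assms by simp
  then show ?thesis using \<open>a > 0\<close> by (simp add: mult_left_mono)
qed simp

lemma ent_split: fixes a c :: real assumes "0 \<le> a" "0 \<le> c"
  shows "- ((a + c) * ln (a + c)) \<le> - (a * ln a) + - (c * ln c)"
  using xlnx_le[OF assms] xlnx_le[OF assms(2,1)] by (simp add: algebra_simps)

lemma map_upto_Suc: "map x [0..int (Suc j)] = map x [0..int j] @ [x (int (Suc j))]"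
  by (simp only: upto_int_eq) simp

lemma marg_split:
  assumes "prob_space \<mu>" "sets \<mu> = sets Mz"
  shows "marginal_prob \<mu> j xs = marginal_prob \<mu> (Suc j) (xs @ [False]) + marginal_prob \<mu> (Suc j) (xs @ [True])"
proof -
  interpret prob_space \<mu> by fact
  have sp: "space \<mu> = UNIV" using sets_eq_imp_space_eq[OF assms(2)] by simp
  have meas: "{x \<in> space \<mu>. map x L = ys} \<in> sets \<mu>" for L ys
    using cyl_sets[of L ys] assms(2) sp by simp
  define A where "A b = {x \<in> space \<mu>. map x [0..int (Suc j)] = xs @ [b]}" for b
  have "{x \<in> space \<mu>. map x [0..int j] = xs} = A False \<union> A True"
    unfolding A_def map_upto_Suc by auto
  moreover have "A False \<inter> A True = {}" unfolding A_def by auto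
  moreover have "A False \<in> sets \<mu>" "A True \<in> sets \<mu>" unfolding A_def using meas by auto
  ultimately show ?thesis unfolding marginal_prob_def A_def[symmetric]
    by (simp add: finite_measure_Union)
qed

lemma marg_nonneg: "0 \<le> marginal_prob \<mu> j xs"
  by (simp add: marginal_prob_def)

lemma bin_Suc: "bin_strings (Suc n) = (\<lambda>(xs, b). xs @ [b]) ` (bin_strings n \<times> UNIV)"
  unfolding bin_strings_def
proof (auto simp: image_iff)
  fix ys :: "bool list" assume "length ys = Suc n"
  then show "\<exists>a. length a = n \<and> (\<exists>b. ys = a @ [b])"
    by (metis append_butlast_last_id length_butlast diff_Suc_1 length_greater_0_conv zero_less_Suc)
qed

lemma bin_finite: "finite (bin_strings n)"
proof (induction n)
  case 0 then show ?case by (simp add: bin_strings_def)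
next
  case (Suc n) then show ?case by (simp add: bin_Suc)
qed

lemma inj_snoc: "inj_on (\<lambda>(xs, b). xs @ [b]) A"
  by (auto simp: inj_on_def)

lemma ent_mono:
  assumes "prob_space \<mu>" "sets \<mu> = sets Mz"
  shows "gs_entropy (marginal_prob \<mu> j) (bin_strings (Suc j)) \<le> gs_entropy (marginal_prob \<mu> (Suc j)) (bin_strings (Suc (Suc j)))"
proof -
  let ?p = "marginal_prob \<mu> (Suc j)"
  let ?q = "marginal_prob \<mu> j"
  have "gs_entropy ?p (bin_strings (Suc (Suc j))) = (\<Sum>xb\<in>bin_strings (Suc j) \<times> UNIV. - (?p (fst xb @ [snd xb]) * ln (?p (fst xb @ [snd xb]))))"
    unfolding gs_entropy_def bin_Suc[of "Suc j"]
    by (subst sum.reindex[OF inj_snoc]) (simp add: sum_negf case_prod_beta)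
  also have "\<dots> = (\<Sum>xs\<in>bin_strings (Suc j). \<Sum>b\<in>UNIV. - (?p (xs @ [b]) * ln (?p (xs @ [b]))))"
    by (simp add: sum.cartesian_product case_prod_beta)
  also have "\<dots> = (\<Sum>xs\<in>bin_strings (Suc j). - (?p (xs @ [False]) * ln (?p (xs @ [False]))) + - (?p (xs @ [True]) * ln (?p (xs @ [True]))))"
    by (simp add: UNIV_bool add.commute)
  finally have e: "gs_entropy ?p (bin_strings (Suc (Suc j))) = \<dots>" .
  have "gs_entropy ?q (bin_strings (Suc j)) = (\<Sum>xs\<in>bin_strings (Suc j). - (?q xs * ln (?q xs)))"
    unfolding gs_entropy_def by (simp add: sum_negf)
  also have "\<dots> \<le> (\<Sum>xs\<in>bin_strings (Suc j). - (?p (xs @ [False]) * ln (?p (xs @ [False]))) + - (?p (xs @ [True]) * ln (?p (xs @ [True]))))"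
  proof (rule sum_mono)
    fix xs
    show "- (?q xs * ln (?q xs)) \<le> - (?p (xs @ [False]) * ln (?p (xs @ [False]))) + - (?p (xs @ [True]) * ln (?p (xs @ [True])))"
      unfolding marg_split[OF assms, of j xs] by (rule ent_split) (simp_all add: marg_nonneg)
  qed
  finally show ?thesis using e by simp
qed




locale permS =
  fixes \<phi> :: "'a \<Rightarrow> 'a" and S :: "'a set"
  assumes bij: "bij_betw \<phi> S S" and fin: "finite S"
begin

lemma fS: "x \<in> S \<Longrightarrow> (\<phi> ^^ n) x \<in> S"
  by (induction n) (use bij in \<open>auto simp: bij_betw_def\<close>)

lemma cancel: "x \<in> S \<Longrightarrow> y \<in> S \<Longrightarrow> (\<phi> ^^ n) x = (\<phi> ^^ n) y \<Longrightarrow> x = y"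
proof (induction n)
  case 0 then show ?case by simp
next
  case (Suc n)
  have "\<phi> ((\<phi> ^^ n) x) = \<phi> ((\<phi> ^^ n) y)" using Suc.prems by simp
  then have "(\<phi> ^^ n) x = (\<phi> ^^ n) y"
    using bij fS Suc.prems by (auto simp: bij_betw_def inj_on_def)
  then show ?case using Suc by simp
qed

lemma ex_period: assumes "x \<in> S" shows "\<exists>n>0. (\<phi> ^^ n) x = x"
proof -
  have "\<not> inj_on (\<lambda>n. (\<phi> ^^ n) x) {..card S}"
  proof
    assume "inj_on (\<lambda>n. (\<phi> ^^ n) x) {..card S}"
    then have "card {..card S} \<le> card S"
      by (rule card_inj_on_le) (use fS assms fin in auto)
    then show False by simp
  qed
  then obtain a b where ab: "a \<noteq> b" "(\<phi> ^^ a) x = (\<phi> ^^ b) x"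
    unfolding inj_on_def by auto
  have "\<exists>a b. a < b \<and> (\<phi> ^^ a) x = (\<phi> ^^ b) x"
  proof (cases "a < b")
    case True then show ?thesis using ab by blast
  next
    case False then have "b < a" using ab(1) by simp
    then show ?thesis using ab(2) by (intro exI[of _ b] exI[of _ a]) simp
  qed
  then obtain a b where ab: "a < b" "(\<phi> ^^ a) x = (\<phi> ^^ b) x" by blast
  have "(\<phi> ^^ b) x = (\<phi> ^^ (a + (b - a))) x" using ab(1) by simp
  also have "\<dots> = (\<phi> ^^ a) ((\<phi> ^^ (b - a)) x)" by (simp only: funpow_add comp_apply)
  finally have "(\<phi> ^^ b) x = (\<phi> ^^ a) ((\<phi> ^^ (b - a)) x)" .
  with ab(2) have "(\<phi> ^^ a) x = (\<phi> ^^ a) ((\<phi> ^^ (b - a)) x)" by (rule trans)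
  then have "x = (\<phi> ^^ (b - a)) x" by (rule cancel[OF assms fS[OF assms]])
  then show ?thesis using ab(1) by (intro exI[of _ "b - a"]) simp
qed

definition per :: "'a \<Rightarrow> nat" where "per x = (LEAST n. n > 0 \<and> (\<phi> ^^ n) x = x)"

lemma per: assumes "x \<in> S" shows "per x > 0" "(\<phi> ^^ per x) x = x"
  using LeastI_ex[OF ex_period[OF assms]] unfolding per_def by auto

lemma per_min: "0 < n \<Longrightarrow> n < per x \<Longrightarrow> (\<phi> ^^ n) x \<noteq> x"
  unfolding per_def using not_less_Least by blast

lemma fmod: "x \<in> S \<Longrightarrow> (\<phi> ^^ m) x = (\<phi> ^^ (m mod per x)) x"
  using funpow_mod_eq[where f=\<phi> and n="per x" and x=x and m=m] per by simp

lemma inj_per: assumes "x \<in> S" shows "inj_on (\<lambda>n. (\<phi> ^^ n) x) {..<per x}"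
proof (rule inj_onI)
  have gen: "a = b" if "a < b" "b < per x" "(\<phi> ^^ a) x = (\<phi> ^^ b) x" for a b
  proof -
    have "(\<phi> ^^ b) x = (\<phi> ^^ (a + (b - a))) x" using that(1) by simp
    also have "\<dots> = (\<phi> ^^ a) ((\<phi> ^^ (b - a)) x)" by (simp only: funpow_add comp_apply)
    finally have "(\<phi> ^^ b) x = (\<phi> ^^ a) ((\<phi> ^^ (b - a)) x)" .
    with that(3) have "(\<phi> ^^ a) x = (\<phi> ^^ a) ((\<phi> ^^ (b - a)) x)" by (rule trans)
    then have "x = (\<phi> ^^ (b - a)) x" by (rule cancel[OF assms fS[OF assms]])
    moreover have "(\<phi> ^^ (b - a)) x \<noteq> x" by (rule per_min) (use that in auto)
    ultimately show ?thesis by metis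
  qed
  fix a b assume "a \<in> {..<per x}" "b \<in> {..<per x}" "(\<phi> ^^ a) x = (\<phi> ^^ b) x"
  then show "a = b" using gen[of a b] gen[of b a] by (cases a b rule: linorder_cases) auto
qed

lemma orbit_eq: assumes "x \<in> S" shows "orbit_of \<phi> x = (\<lambda>n. (\<phi> ^^ n) x) ` {..<per x}"
proof
  show "orbit_of \<phi> x \<subseteq> (\<lambda>n. (\<phi> ^^ n) x) ` {..<per x}"
  proof
    fix y assume "y \<in> orbit_of \<phi> x"
    then obtain n where y: "y = (\<phi> ^^ n) x" unfolding orbit_of_def by auto
    have "n mod per x < per x" using per(1)[OF assms] by simp
    moreover have "y = (\<phi> ^^ (n mod per x)) x" using y fmod[OF assms] by simp
    ultimately show "y \<in> (\<lambda>n. (\<phi> ^^ n) x) ` {..<per x}" by blast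
  qed
qed (auto simp: orbit_of_def)

lemma card_orbit: "x \<in> S \<Longrightarrow> card (orbit_of \<phi> x) = per x"
  by (simp add: orbit_eq[of x] card_image[OF inj_per[of x]])

lemma orbit_sub: "x \<in> S \<Longrightarrow> orbit_of \<phi> x \<subseteq> S"
  unfolding orbit_of_def using fS by auto

lemma orbit_self: "x \<in> S \<Longrightarrow> x \<in> orbit_of \<phi> x"
  unfolding orbit_of_def by (auto intro: exI[of _ 0])

lemma orbit_iter: assumes "x \<in> S" shows "orbit_of \<phi> ((\<phi> ^^ s) x) = orbit_of \<phi> x"
proof
  show "orbit_of \<phi> ((\<phi> ^^ s) x) \<subseteq> orbit_of \<phi> x"
  proof
    fix y assume "y \<in> orbit_of \<phi> ((\<phi> ^^ s) x)"
    then obtain n where "y = (\<phi> ^^ n) ((\<phi> ^^ s) x)" unfolding orbit_of_def by auto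
    then have "y = (\<phi> ^^ (n + s)) x" by (simp add: funpow_add)
    then show "y \<in> orbit_of \<phi> x" unfolding orbit_of_def by blast
  qed
  show "orbit_of \<phi> x \<subseteq> orbit_of \<phi> ((\<phi> ^^ s) x)"
  proof
    fix y assume "y \<in> orbit_of \<phi> x"
    then obtain n where y: "y = (\<phi> ^^ n) x" unfolding orbit_of_def by auto
    have "1 * s \<le> per x * s" using per(1)[OF assms] by (intro mult_le_mono1) simp
    then have "s \<le> per x * s" by simp
    then have "n + per x * s - s + s = n + per x * s"
      by (intro le_add_diff_inverse2) (rule trans_le_add2)
    note eqn = this
    have e: "(\<phi> ^^ (n + per x * s - s + s)) x = (\<phi> ^^ (n + per x * s - s)) ((\<phi> ^^ s) x)"
      by (simp only: funpow_add comp_apply)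
    have "(\<phi> ^^ (n + per x * s - s)) ((\<phi> ^^ s) x) = (\<phi> ^^ (n + per x * s)) x"
      using e unfolding eqn by simp
    also have "\<dots> = (\<phi> ^^ n) x" using fmod[OF assms, of "n + per x * s"] fmod[OF assms, of n] by simp
    finally have "(\<phi> ^^ (n + per x * s - s)) ((\<phi> ^^ s) x) = y" using y by simp
    then show "y \<in> orbit_of \<phi> ((\<phi> ^^ s) x)" unfolding orbit_of_def by blast
  qed
qed

lemma orbit_mem: assumes "x \<in> S" "y \<in> orbit_of \<phi> x" shows "orbit_of \<phi> y = orbit_of \<phi> x"
proof -
  obtain n where "y = (\<phi> ^^ n) x" using assms(2) unfolding orbit_of_def by auto
  then show ?thesis using orbit_iter[OF assms(1), of n] by simp
qed

lemma per_iter: "x \<in> S \<Longrightarrow> per ((\<phi> ^^ s) x) = per x"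
  using card_orbit[of x] card_orbit[of "(\<phi> ^^ s) x"] orbit_iter[of x s] fS[of x s] by simp

lemma orbit_path_len: "length (orbit_path \<phi> x) = card (orbit_of \<phi> x)"
  by (simp add: orbit_path_def)

lemma orbit_path_nth: "n < card (orbit_of \<phi> x) \<Longrightarrow> orbit_path \<phi> x ! n = (\<phi> ^^ n) x"
  by (simp add: orbit_path_def)

end



locale mainctx =
  fixes k :: nat and \<mu>k :: "bool list pmf" and \<phi> :: "bool list \<Rightarrow> bool list"
  assumes supp: "set_pmf \<mu>k \<subseteq> bin_strings (Suc k)"
    and bijS: "bij_betw \<phi> (bin_strings (Suc k)) (bin_strings (Suc k))"
    and inv: "\<forall>\<eta>\<in>bin_strings (Suc k). pmf \<mu>k (\<phi> \<eta>) = pmf \<mu>k \<eta>"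
    and dB: "\<forall>\<xi>\<in>bin_strings k. \<phi> ` {False # \<xi>, True # \<xi>} = {\<xi> @ [False], \<xi> @ [True]}"
begin

abbreviation "S \<equiv> bin_strings (Suc k)"

sublocale permS \<phi> S
  using bijS bin_finite by unfold_locales auto

lemma phi_nth: assumes "\<eta> \<in> S" "i < k" shows "\<phi> \<eta> ! i = \<eta> ! Suc i"
proof -
  obtain a \<xi> where e: "\<eta> = a # \<xi>" using assms(1) unfolding bin_strings_def by (cases \<eta>) auto
  have \<xi>: "\<xi> \<in> bin_strings k" using assms(1) e unfolding bin_strings_def by simp
  have "\<phi> \<eta> \<in> {\<xi> @ [False], \<xi> @ [True]}" using dB \<xi> e by (cases a) auto
  then show ?thesis using assms(2) \<xi> e unfolding bin_strings_def by (auto simp: nth_append)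
qed

lemma iter_nth: "\<eta> \<in> S \<Longrightarrow> i + n \<le> k \<Longrightarrow> (\<phi> ^^ n) \<eta> ! i = \<eta> ! (i + n)"
proof (induction n arbitrary: \<eta> i)
  case 0 then show ?case by simp
next
  case (Suc n)
  have "\<phi> \<eta> \<in> S" using bijS Suc.prems by (auto simp: bij_betw_def)
  then have "(\<phi> ^^ n) (\<phi> \<eta>) ! i = \<phi> \<eta> ! (i + n)" using Suc by simp
  also have "\<dots> = \<eta> ! (i + Suc n)" using phi_nth Suc.prems by simp
  finally show ?case by (simp add: funpow_Suc_right del: funpow.simps)
qed

lemma len_S: "\<eta> \<in> S \<Longrightarrow> length \<eta> = Suc k" by (simp add: bin_strings_def)

lemma hd_iter: assumes "\<eta> \<in> S" "n \<le> k" shows "hd ((\<phi> ^^ n) \<eta>) = \<eta> ! n"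
proof -
  have "length ((\<phi> ^^ n) \<eta>) = Suc k" using fS[OF assms(1)] len_S by blast
  then have "hd ((\<phi> ^^ n) \<eta>) = (\<phi> ^^ n) \<eta> ! 0" by (cases "(\<phi> ^^ n) \<eta>") auto
  then show ?thesis using iter_nth[OF assms(1), of 0 n] assms by simp
qed

definition C :: "bool list \<Rightarrow> int \<Rightarrow> bool" where "C \<eta> = cyc_config (orbit_path \<phi> \<eta>)"

lemma C_eq: assumes "\<eta> \<in> S" shows "C \<eta> i = hd ((\<phi> ^^ nat (i mod int (per \<eta>))) \<eta>)"
proof -
  have p: "per \<eta> > 0" using per[OF assms] by simp
  have "nat (i mod int (per \<eta>)) < per \<eta>" using p by (simp add: nat_less_iff)
  then show ?thesis unfolding C_def cyc_config_def
    using orbit_path_len[of \<eta>] orbit_path_nth[of _ \<eta>] card_orbit[OF assms] by simp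
qed

lemma C_nat: assumes "\<eta> \<in> S" shows "C \<eta> (int n) = hd ((\<phi> ^^ n) \<eta>)"
proof -
  have "nat (int n mod int (per \<eta>)) = n mod per \<eta>" by (simp add: nat_mod_as_int)
  then show ?thesis using C_eq[OF assms] fmod[OF assms, of n] by simp
qed

lemma C_shift: assumes "\<eta> \<in> S" shows "C \<eta> (i + int s) = C ((\<phi> ^^ s) \<eta>) i"
proof -
  let ?p = "per \<eta>"
  have p: "?p > 0" using per[OF assms] by simp
  have ps: "per ((\<phi> ^^ s) \<eta>) = ?p" using per_iter[OF assms] .
  have "nat ((i + int s) mod int ?p) = nat ((i mod int ?p + int s) mod int ?p)"
    by (simp add: mod_add_left_eq)
  also have "\<dots> = nat (i mod int ?p + int s) mod ?p"
    using p by (simp add: nat_mod_distrib)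
  also have "\<dots> = (nat (i mod int ?p) + s) mod ?p"
    using p by (simp add: nat_add_distrib)
  finally have e: "nat ((i + int s) mod int ?p) = (nat (i mod int ?p) + s) mod ?p" .
  have "C ((\<phi> ^^ s) \<eta>) i = hd ((\<phi> ^^ nat (i mod int ?p)) ((\<phi> ^^ s) \<eta>))"
    using C_eq[OF fS[OF assms]] ps by simp
  also have "\<dots> = hd ((\<phi> ^^ (nat (i mod int ?p) + s)) \<eta>)" by (simp add: funpow_add)
  also have "\<dots> = hd ((\<phi> ^^ ((nat (i mod int ?p) + s) mod ?p)) \<eta>)" using fmod[OF assms] by metis
  also have "\<dots> = C \<eta> (i + int s)" using C_eq[OF assms] e by simp
  finally show ?thesis by simp
qed

definition W :: "nat \<Rightarrow> bool list \<Rightarrow> bool list" where "W j \<eta> = map (C \<eta>) [0..int j]"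

lemma W_eq: "\<eta> \<in> S \<Longrightarrow> W j \<eta> = map (\<lambda>n. hd ((\<phi> ^^ n) \<eta>)) [0..<Suc j]"
  unfolding W_def upto_int_eq by (simp add: C_nat)

lemma W_k: assumes "\<eta> \<in> S" shows "W k \<eta> = \<eta>"
proof -
  have "W k \<eta> = map (\<lambda>n. \<eta> ! n) [0..<Suc k]"
    using W_eq[OF assms] hd_iter[OF assms] by simp
  also have "\<dots> = \<eta>" using len_S[OF assms] map_nth by metis
  finally show ?thesis .
qed

lemma W_take: assumes "\<eta> \<in> S" "k \<le> j" shows "take (Suc k) (W j \<eta>) = \<eta>"
proof -
  have "take (Suc k) (W j \<eta>) = map (\<lambda>n. hd ((\<phi> ^^ n) \<eta>)) (take (Suc k) [0..<Suc j])"
    by (simp only: W_eq[OF assms(1)] take_map)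
  also have "take (Suc k) [0..<Suc j] = [0..<Suc k]" using assms(2) by (simp add: take_upt min_def del: upt_Suc)
  also have "map (\<lambda>n. hd ((\<phi> ^^ n) \<eta>)) [0..<Suc k] = W k \<eta>" by (simp only: W_eq[OF assms(1)])
  finally show ?thesis using W_k[OF assms(1)] by simp
qed

lemma W_inj: "k \<le> j \<Longrightarrow> inj_on (W j) S"
  by (rule inj_onI) (metis W_take)

lemma W_len: "W j \<eta> \<in> bin_strings (Suc j)"
  by (simp add: W_def bin_strings_def upto_int_eq)

end



context mainctx begin

definition q where "q = map_pmf C \<mu>k"
definition mu where "mu = distr (measure_pmf q) Mz id"

lemma id_meas: "id \<in> measurable (measure_pmf q) Mz" by simp

lemma mu_prob: "prob_space mu"
  unfolding mu_def by (rule prob_space.prob_space_distr[OF prob_space_measure_pmf id_meas])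

lemma mu_sets: "sets mu = sets Mz" by (simp add: mu_def)
lemma mu_space: "space mu = UNIV" by (simp add: mu_def)

lemma meas_S: "measure (measure_pmf \<mu>k) B = measure (measure_pmf \<mu>k) (B \<inter> S)"
proof -
  have "B \<inter> S \<inter> set_pmf \<mu>k = B \<inter> set_pmf \<mu>k" using supp by auto
  then show ?thesis using measure_Int_set_pmf[of \<mu>k B] measure_Int_set_pmf[of \<mu>k "B \<inter> S"] by simp
qed

lemma meas_sum: "measure (measure_pmf \<mu>k) B = (\<Sum>\<eta>\<in>S. if \<eta> \<in> B then pmf \<mu>k \<eta> else 0)"
proof -
  have "B \<inter> S = {\<eta> \<in> S. \<eta> \<in> B}" by auto
  then show ?thesis using meas_S[of B] measure_measure_pmf_finite[of "B \<inter> S" \<mu>k] bin_finite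
    sum.inter_filter[of S "pmf \<mu>k" "\<lambda>\<eta>. \<eta> \<in> B"] by simp
qed

lemma mu_meas: assumes "A \<in> sets Mz" shows "measure mu A = (\<Sum>\<eta>\<in>S. if C \<eta> \<in> A then pmf \<mu>k \<eta> else 0)"
proof -
  have "measure mu A = measure (measure_pmf q) (id -` A \<inter> space (measure_pmf q))"
    unfolding mu_def using assms by (rule measure_distr[OF id_meas])
  also have "\<dots> = measure (measure_pmf \<mu>k) (C -` A)" by (simp add: q_def)
  also have "\<dots> = (\<Sum>\<eta>\<in>S. if C \<eta> \<in> A then pmf \<mu>k \<eta> else 0)" by (simp add: meas_sum)
  finally show ?thesis .
qed

lemma pmf_iter: "\<eta> \<in> S \<Longrightarrow> pmf \<mu>k ((\<phi> ^^ n) \<eta>) = pmf \<mu>k \<eta>"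
proof (induction n)
  case (Suc n)
  then show ?case using inv fS[OF Suc.prems, of n] by simp
qed simp

lemma C_phi: "\<eta> \<in> S \<Longrightarrow> (\<lambda>i. C \<eta> (i + 1)) = C (\<phi> \<eta>)"
  using C_shift[of \<eta> _ 1] by auto

lemma mu_ti: "ti_measure mu"
  unfolding ti_measure_def
proof (intro conjI mu_prob mu_sets)
  interpret prob_space mu by (rule mu_prob)
  have shm: "(\<lambda>x i. x (i + 1)) \<in> measurable mu Mz"
    using shift_meas measurable_cong_sets[OF mu_sets refl] by blast
  show "distr mu Mz (\<lambda>x i. x (i + 1)) = mu"
  proof (rule measure_eqI)
    show "sets (distr mu Mz (\<lambda>x i. x (i + 1))) = sets mu" by (simp add: mu_sets)
  next
    fix A assume "A \<in> sets (distr mu Mz (\<lambda>x i. x (i + 1)))"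
    then have A: "A \<in> sets Mz" by simp
    let ?B = "(\<lambda>x i. x (i + 1)) -` A \<inter> space mu"
    have B: "?B \<in> sets Mz" using measurable_sets[OF shift_meas A] by (simp add: mu_space)
    have "measure mu ?B = (\<Sum>\<eta>\<in>S. if C \<eta> \<in> ?B then pmf \<mu>k \<eta> else 0)" by (rule mu_meas[OF B])
    also have "\<dots> = (\<Sum>\<eta>\<in>S. if C (\<phi> \<eta>) \<in> A then pmf \<mu>k (\<phi> \<eta>) else 0)"
      by (rule sum.cong) (auto simp: mu_space C_phi inv)
    also have "\<dots> = (\<Sum>\<eta>\<in>S. if C \<eta> \<in> A then pmf \<mu>k \<eta> else 0)"
      by (rule sum.reindex_bij_betw[OF bijS])
    also have "\<dots> = measure mu A" by (rule mu_meas[OF A, symmetric])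
    finally have "measure mu ?B = measure mu A" .
    then show "emeasure (distr mu Mz (\<lambda>x i. x (i + 1))) A = emeasure mu A"
      using emeasure_distr[OF shm A] by (simp add: emeasure_eq_measure)
  qed
qed

lemma marg_mu: "marginal_prob mu j ys = (\<Sum>\<eta>\<in>S. if W j \<eta> = ys then pmf \<mu>k \<eta> else 0)"
proof -
  have "marginal_prob mu j ys = measure mu {x \<in> space Mz. map x [0..int j] = ys}"
    by (simp add: marginal_prob_def mu_space)
  also have "\<dots> = (\<Sum>\<eta>\<in>S. if W j \<eta> = ys then pmf \<mu>k \<eta> else 0)"
    by (subst mu_meas[OF cyl_sets]) (simp add: W_def)
  finally show ?thesis .
qed

lemma mu_ext: "extends mu k \<mu>k"
  unfolding extends_def
proof
  fix xs assume xs: "xs \<in> S"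
  have "marginal_prob mu k xs = (\<Sum>\<eta>\<in>S. if \<eta> = xs then pmf \<mu>k \<eta> else 0)"
    unfolding marg_mu by (rule sum.cong) (auto simp: W_k)
  also have "\<dots> = pmf \<mu>k xs" using xs by (simp add: sum.delta bin_finite)
  finally show "marginal_prob mu k xs = pmf \<mu>k xs" .
qed

lemma marg_W: assumes "k \<le> j" "\<eta> \<in> S" shows "marginal_prob mu j (W j \<eta>) = pmf \<mu>k \<eta>"
proof -
  have "marginal_prob mu j (W j \<eta>) = (\<Sum>\<eta>'\<in>S. if \<eta>' = \<eta> then pmf \<mu>k \<eta>' else 0)"
    unfolding marg_mu by (rule sum.cong) (use W_inj[OF assms(1)] assms(2) in \<open>auto simp: inj_on_def\<close>)
  also have "\<dots> = pmf \<mu>k \<eta>" using assms(2) by (simp add: sum.delta bin_finite)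
  finally show ?thesis .
qed

lemma marg_out: "ys \<notin> W j ` S \<Longrightarrow> marginal_prob mu j ys = 0"
  unfolding marg_mu by (rule sum.neutral) auto

lemma ent_mu: assumes "k \<le> j"
  shows "gs_entropy (marginal_prob mu j) (bin_strings (Suc j)) = gs_entropy (pmf \<mu>k) S"
proof -
  let ?g = "marginal_prob mu j"
  have "(\<Sum>ys\<in>bin_strings (Suc j). ?g ys * ln (?g ys)) = (\<Sum>ys\<in>W j ` S. ?g ys * ln (?g ys))"
    by (rule sum.mono_neutral_right) (auto simp: bin_finite W_len marg_out)
  also have "\<dots> = (\<Sum>\<eta>\<in>S. ?g (W j \<eta>) * ln (?g (W j \<eta>)))"
    by (subst sum.reindex[OF W_inj[OF assms]]) (simp add: comp_def)
  also have "\<dots> = (\<Sum>\<eta>\<in>S. pmf \<mu>k \<eta> * ln (pmf \<mu>k \<eta>))"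
    by (rule sum.cong) (simp_all add: marg_W[OF assms])
  finally show ?thesis unfolding gs_entropy_def by simp
qed

lemma te_mu: "total_entropy mu = ereal (gs_entropy (pmf \<mu>k) S)"
  unfolding total_entropy_def
proof (rule limI, rule tendsto_eventually)
  show "\<forall>\<^sub>F j in sequentially. ereal (gs_entropy (marginal_prob mu j) (bin_strings (Suc j))) = ereal (gs_entropy (pmf \<mu>k) S)"
    unfolding eventually_sequentially using ent_mu by auto
qed

lemma te_min: assumes "ti_measure \<mu>'" "extends \<mu>' k \<mu>k"
  shows "total_entropy mu \<le> total_entropy \<mu>'"
proof -
  have ps: "prob_space \<mu>'" "sets \<mu>' = sets Mz" using assms(1) by (auto simp: ti_measure_def)
  let ?f = "\<lambda>j. ereal (gs_entropy (marginal_prob \<mu>' j) (bin_strings (Suc j)))"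
  have inc: "incseq ?f" by (rule incseq_SucI) (simp add: ent_mono[OF ps])
  have "total_entropy \<mu>' = (SUP j. ?f j)" unfolding total_entropy_def by (rule limI[OF LIMSEQ_SUP[OF inc]])
  moreover have "?f k = ereal (gs_entropy (pmf \<mu>k) S)"
    using assms(2) unfolding extends_def gs_entropy_def by (simp cong: sum.cong)
  ultimately show ?thesis unfolding te_mu by (metis SUP_upper UNIV_I)
qed

end



context mainctx begin

definition h where "h A \<eta> = (if C \<eta> \<in> A then pmf \<mu>k \<eta> else 0)"

lemma orbit_term: assumes "\<eta>0 \<in> S" "P = orbit_of \<phi> \<eta>0"
  shows "pmf \<mu>k (SOME \<eta>. \<eta> \<in> P) * real (card P) *
            measure_pmf.prob (nu_path (orbit_path \<phi> (SOME \<eta>. \<eta> \<in> P))) A = (\<Sum>\<eta>\<in>P. h A \<eta>)"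
proof -
  define r where "r = (SOME \<eta>. \<eta> \<in> P)"
  have rP: "r \<in> P" unfolding r_def using someI[of "\<lambda>\<eta>. \<eta> \<in> P" \<eta>0] orbit_self assms by auto
  have rS: "r \<in> S" using rP orbit_sub assms by auto
  have Pr: "orbit_of \<phi> r = P" using orbit_mem[OF assms(1)] rP assms(2) by simp
  define p where "p = per r"
  have cP: "card P = p" using card_orbit[OF rS] Pr p_def by simp
  have p0: "p > 0" using per[OF rS] p_def by simp
  have len: "length (orbit_path \<phi> r) = p" using orbit_path_len[of r] cP Pr by simp
  have cs: "cyc_config (orbit_path \<phi> r) (i + int s) = C ((\<phi> ^^ s) r) i" for i s
    using C_shift[OF rS, of i s] unfolding C_def by simp
  have fe: "(\<lambda>s i. cyc_config (orbit_path \<phi> r) (i + int s)) = (\<lambda>s. C ((\<phi> ^^ s) r))"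
    by (intro ext) (simp add: cs)
  define X where "X = {s \<in> {..<p}. C ((\<phi> ^^ s) r) \<in> A}"
  have "measure_pmf.prob (nu_path (orbit_path \<phi> r)) A
      = measure (measure_pmf (pmf_of_set {..<p})) ((\<lambda>s. C ((\<phi> ^^ s) r)) -` A)"
    unfolding nu_path_def len fe by simp
  also have "\<dots> = card ({..<p} \<inter> (\<lambda>s. C ((\<phi> ^^ s) r)) -` A) / card {..<p}"
    by (rule measure_pmf_of_set) (use p0 in auto)
  also have "{..<p} \<inter> (\<lambda>s. C ((\<phi> ^^ s) r)) -` A = X" unfolding X_def by auto
  finally have prob: "measure_pmf.prob (nu_path (orbit_path \<phi> r)) A = card X / p" by simp
  have P_img: "P = (\<lambda>n. (\<phi> ^^ n) r) ` {..<p}" using orbit_eq[OF rS] Pr p_def by simp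
  have "(\<Sum>\<eta>\<in>P. h A \<eta>) = (\<Sum>s\<in>{..<p}. h A ((\<phi> ^^ s) r))"
    unfolding P_img p_def by (subst sum.reindex[OF inj_per[OF rS]]) (simp add: comp_def)
  also have "\<dots> = (\<Sum>s\<in>{..<p}. if C ((\<phi> ^^ s) r) \<in> A then pmf \<mu>k r else 0)"
    by (rule sum.cong) (simp_all add: h_def pmf_iter[OF rS])
  also have "\<dots> = (\<Sum>s\<in>X. pmf \<mu>k r)"
    unfolding X_def by (rule sum.inter_filter[symmetric]) simp
  also have "\<dots> = real (card X) * pmf \<mu>k r" by simp
  finally have sP: "(\<Sum>\<eta>\<in>P. h A \<eta>) = real (card X) * pmf \<mu>k r" .
  show ?thesis unfolding r_def[symmetric] prob sP cP using p0 by simp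
qed

lemma union_orbits: "\<Union> (orbit_of \<phi> ` S) = S"
  using orbit_sub orbit_self by blast

lemma disj_orbits: "\<forall>P\<in>orbit_of \<phi> ` S. \<forall>Q\<in>orbit_of \<phi> ` S. P \<noteq> Q \<longrightarrow> P \<inter> Q = {}"
proof (intro ballI impI)
  fix P Q assume P: "P \<in> orbit_of \<phi> ` S" and Q: "Q \<in> orbit_of \<phi> ` S" and ne: "P \<noteq> Q"
  obtain a b where a: "a \<in> S" "P = orbit_of \<phi> a" and b: "b \<in> S" "Q = orbit_of \<phi> b" using P Q by auto
  show "P \<inter> Q = {}"
  proof (rule ccontr)
    assume "P \<inter> Q \<noteq> {}"
    then obtain z where z: "z \<in> orbit_of \<phi> a" "z \<in> orbit_of \<phi> b" using a b by auto
    have "orbit_of \<phi> z = orbit_of \<phi> a" by (rule orbit_mem[OF a(1) z(1)])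
    moreover have "orbit_of \<phi> z = orbit_of \<phi> b" by (rule orbit_mem[OF b(1) z(2)])
    ultimately have "P = Q" using a(2) b(2) by simp
    then show False using ne by simp
  qed
qed

lemma formula: assumes "A \<in> sets Mz"
  shows "measure mu A =
         (\<Sum>P\<in>orbit_of \<phi> ` S.
            pmf \<mu>k (SOME \<eta>. \<eta> \<in> P) * real (card P) *
            measure_pmf.prob (nu_path (orbit_path \<phi> (SOME \<eta>. \<eta> \<in> P))) A)"
proof -
  have "(\<Sum>P\<in>orbit_of \<phi> ` S.
            pmf \<mu>k (SOME \<eta>. \<eta> \<in> P) * real (card P) *
            measure_pmf.prob (nu_path (orbit_path \<phi> (SOME \<eta>. \<eta> \<in> P))) A)
        = (\<Sum>P\<in>orbit_of \<phi> ` S. \<Sum>\<eta>\<in>P. h A \<eta>)"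
    by (rule sum.cong) (auto intro: orbit_term)
  also have "\<dots> = (\<Sum>\<eta>\<in>\<Union> (orbit_of \<phi> ` S). h A \<eta>)"
  proof -
    have fin: "\<forall>P\<in>orbit_of \<phi> ` S. finite P" using orbit_sub bin_finite finite_subset by blast
    show ?thesis using sum.Union_disjoint[OF fin disj_orbits, of "h A"] by (simp add: comp_def)
  qed
  also have "\<dots> = measure mu A" unfolding union_orbits mu_meas[OF assms] h_def ..
  finally show ?thesis by simp
qed

end

theorem mainTheorem9:
  fixes k :: nat and \<mu>k :: "bool list pmf" and \<phi> :: "bool list \<Rightarrow> bool list"
  assumes "k \<ge> 1"
    and "set_pmf \<mu>k \<subseteq> bin_strings (Suc k)"
    and "LTI k \<mu>k"
    and "bij_betw \<phi> (bin_strings (Suc k)) (bin_strings (Suc k))"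
    and "\<forall>\<eta>\<in>bin_strings (Suc k). pmf \<mu>k (\<phi> \<eta>) = pmf \<mu>k \<eta>"
    and "\<forall>\<xi>\<in>bin_strings k. \<phi> ` {False # \<xi>, True # \<xi>} = {\<xi> @ [False], \<xi> @ [True]}"
  shows "\<exists>\<mu>. ti_measure \<mu> \<and> extends \<mu> k \<mu>k
    \<and> total_entropy \<mu> = ereal (gs_entropy (pmf \<mu>k) (bin_strings (Suc k)))
    \<and> (\<forall>\<mu>'. ti_measure \<mu>' \<and> extends \<mu>' k \<mu>k \<longrightarrow> total_entropy \<mu> \<le> total_entropy \<mu>')
    \<and> (\<forall>A\<in>sets Mz. measure \<mu> A =
         (\<Sum>P\<in>orbit_of \<phi> ` bin_strings (Suc k).
            pmf \<mu>k (SOME \<eta>. \<eta> \<in> P) * real (card P) *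
            measure_pmf.prob (nu_path (orbit_path \<phi> (SOME \<eta>. \<eta> \<in> P))) A))"
proof -
  interpret mainctx k \<mu>k \<phi>
    using assms by unfold_locales auto
  show ?thesis
    by (intro exI[of _ mu] conjI allI impI ballI mu_ti mu_ext te_mu formula) (auto intro: te_min)
qed


end
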